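(* Let $\Gamma_1,\Gamma_2$ be propositional theories such that no atom occurring in $\Gamma_1$ is a head atom of $\Gamma_2$, and let $S$ be a set of atoms containing all head atoms of $\Gamma_1$ and no head atoms of $\Gamma_2$. Then a set $X$ of atoms is a stable model of $\Gamma_1\cup\Gamma_2$ if and only if $X\cap S$ is a stable model of $\Gamma_1$ and $X$ is a stable model of the theory $(X\cap S)\cup\Gamma_2$ (where each atom of $X\cap S$ is regarded as a formula).
   Context: Formulas are built from atoms and $\bot$ using $\wedge,\vee,\to$; $\top$, $\neg F$, $F\leftrightarrow G$ abbreviate $\bot\to\bot$, $F\to\bot$, $(F\to G)\wedge(G\to F)$. Reduct: $\bot^X=\bot$; $a^X=a$ if $a\in X$, else $\bot$; $(F\otimes G)^X=F^X\otimes G^X$ if $X\models F\otimes G$, else $\bot$; $\Gamma^X=\{F^X:F\in\Gamma\}$. $X$ is a stable model of $\Gamma$ if $X\models\Gamma^X$ and no proper subset of $X$ satisfies $\Gamma^X$. An occurrence of an atom is strictly positive if it lies in the antecedent of no implication (abbreviations expanded); a head atom of a theory is an atom with a strictly positive occurrence in it. *)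

theory Defs
  imports Main
begin

datatype 'a form = Atom 'a | Bot | And "'a form" "'a form" | Or "'a form" "'a form"
  | Imp "'a form" "'a form"

definition Top :: "'a form" where "Top = Imp Bot Bot"
definition Neg :: "'a form \<Rightarrow> 'a form" where "Neg F = Imp F Bot"
definition Iff :: "'a form \<Rightarrow> 'a form \<Rightarrow> 'a form" where
  "Iff F G = And (Imp F G) (Imp G F)"

fun sat :: "'a set \<Rightarrow> 'a form \<Rightarrow> bool" where
  "sat X (Atom a) = (a \<in> X)"
| "sat X Bot = False"
| "sat X (And F G) = (sat X F \<and> sat X G)"
| "sat X (Or F G) = (sat X F \<or> sat X G)"
| "sat X (Imp F G) = (sat X F \<longrightarrow> sat X G)"

definition sat_th :: "'a set \<Rightarrow> 'a form set \<Rightarrow> bool" where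
  "sat_th X \<Gamma> = (\<forall>F\<in>\<Gamma>. sat X F)"

fun reduct :: "'a form \<Rightarrow> 'a set \<Rightarrow> 'a form" where
  "reduct Bot X = Bot"
| "reduct (Atom a) X = (if a \<in> X then Atom a else Bot)"
| "reduct (And F G) X = (if sat X (And F G) then And (reduct F X) (reduct G X) else Bot)"
| "reduct (Or F G) X = (if sat X (Or F G) then Or (reduct F X) (reduct G X) else Bot)"
| "reduct (Imp F G) X = (if sat X (Imp F G) then Imp (reduct F X) (reduct G X) else Bot)"

definition reduct_th :: "'a form set \<Rightarrow> 'a set \<Rightarrow> 'a form set" where
  "reduct_th \<Gamma> X = (\<lambda>F. reduct F X) ` \<Gamma>"

definition stable_model :: "'a set \<Rightarrow> 'a form set \<Rightarrow> bool" where
  "stable_model X \<Gamma> = (sat_th X (reduct_th \<Gamma> X) \<and>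
      (\<forall>Y. Y \<subset> X \<longrightarrow> \<not> sat_th Y (reduct_th \<Gamma> X)))"

fun atoms :: "'a form \<Rightarrow> 'a set" where
  "atoms (Atom a) = {a}"
| "atoms Bot = {}"
| "atoms (And F G) = atoms F \<union> atoms G"
| "atoms (Or F G) = atoms F \<union> atoms G"
| "atoms (Imp F G) = atoms F \<union> atoms G"

definition atoms_th :: "'a form set \<Rightarrow> 'a set" where
  "atoms_th \<Gamma> = (\<Union>F\<in>\<Gamma>. atoms F)"

text \<open>Atoms with a strictly positive occurrence (not in the antecedent of any implication).\<close>
fun heads :: "'a form \<Rightarrow> 'a set" where
  "heads (Atom a) = {a}"
| "heads Bot = {}"
| "heads (And F G) = heads F \<union> heads G"
| "heads (Or F G) = heads F \<union> heads G"
| "heads (Imp F G) = heads G"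

definition head_atoms :: "'a form set \<Rightarrow> 'a set" where
  "head_atoms \<Gamma> = (\<Union>F\<in>\<Gamma>. heads F)"

end

theory Submission
  imports Defs
begin

lemma sat_local: "\<forall>a\<in>atoms F. a \<in> X \<longleftrightarrow> a \<in> Y \<Longrightarrow> sat X F = sat Y F"
  by (induction F) auto

lemma reduct_local: "\<forall>a\<in>atoms F. a \<in> X \<longleftrightarrow> a \<in> Y \<Longrightarrow> reduct F X = reduct F Y"
proof (induction F)
  case (And F G) then show ?case using sat_local[of "And F G" X Y] by (simp del: sat.simps)
next
  case (Or F G) then show ?case using sat_local[of "Or F G" X Y] by (simp del: sat.simps)
next
  case (Imp F G) then show ?case using sat_local[of "Imp F G" X Y] by (simp del: sat.simps)
qed auto

lemma atoms_reduct: "atoms (reduct F X) \<subseteq> atoms F"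
  by (induction F) auto

lemma sat_reduct_self: "sat X (reduct F X) = sat X F"
  by (induction F) auto

lemma sat_reduct_imp: "sat Y (reduct F X) \<Longrightarrow> sat X F"
  by (cases F) (auto split: if_splits)

lemma heads_keep: "Y \<subseteq> X \<Longrightarrow> (X - Y) \<inter> heads F = {} \<Longrightarrow> sat X F \<Longrightarrow> sat Y (reduct F X)"
proof (induction F)
  case (Imp F G)
  then show ?case using sat_reduct_imp[of Y F X] by auto
qed auto

lemma sat_th_reduct_self: "sat_th X (reduct_th \<Gamma> X) = sat_th X \<Gamma>"
  by (simp add: sat_th_def reduct_th_def sat_reduct_self)

lemma stable_heads:
  assumes "stable_model X \<Gamma>" shows "X \<subseteq> head_atoms \<Gamma>"
proof (rule ccontr)
  assume n: "\<not> X \<subseteq> head_atoms \<Gamma>"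
  define Y where "Y = X \<inter> head_atoms \<Gamma>"
  have ss: "Y \<subset> X" using n unfolding Y_def by blast
  have sX: "sat_th X \<Gamma>" using assms sat_th_reduct_self[of X \<Gamma>]
    unfolding stable_model_def by simp
  have "sat Y (reduct F X)" if F: "F \<in> \<Gamma>" for F
  proof -
    have "sat X F" using sX F unfolding sat_th_def by blast
    moreover have "heads F \<subseteq> head_atoms \<Gamma>" using F unfolding head_atoms_def by blast
    hence "(X - Y) \<inter> heads F = {}" unfolding Y_def by blast
    moreover have "Y \<subseteq> X" unfolding Y_def by blast
    ultimately show ?thesis using heads_keep by blast
  qed
  hence "sat_th Y (reduct_th \<Gamma> X)" unfolding sat_th_def reduct_th_def by blast
  moreover have "\<not> sat_th Y (reduct_th \<Gamma> X)" using assms ss unfolding stable_model_def by blast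
  ultimately show False by blast
qed

lemma head_atoms_union: "head_atoms (A \<union> B) = head_atoms A \<union> head_atoms B"
  by (simp add: head_atoms_def)

lemma sat_th_union: "sat_th X (A \<union> B) = (sat_th X A \<and> sat_th X B)"
  by (auto simp: sat_th_def)

lemma reduct_th_union: "reduct_th (A \<union> B) X = reduct_th A X \<union> reduct_th B X"
  by (auto simp: reduct_th_def)

lemma reduct_atoms: "A \<subseteq> X \<Longrightarrow> reduct_th (Atom ` A) X = Atom ` A"
  by (force simp: reduct_th_def image_iff)

lemma sat_atoms: "sat_th Y (Atom ` A) = (A \<subseteq> Y)"
  by (auto simp: sat_th_def)

theorem proposition10:
  fixes \<Gamma>1 \<Gamma>2 :: "'a form set" and S X :: "'a set"
  assumes "atoms_th \<Gamma>1 \<inter> head_atoms \<Gamma>2 = {}"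
    and "head_atoms \<Gamma>1 \<subseteq> S"
    and "S \<inter> head_atoms \<Gamma>2 = {}"
  shows "stable_model X (\<Gamma>1 \<union> \<Gamma>2) \<longleftrightarrow>
    (stable_model (X \<inter> S) \<Gamma>1 \<and> stable_model X (Atom ` (X \<inter> S) \<union> \<Gamma>2))"
proof -
  let ?A = "X \<inter> S"
  have loc1: "\<forall>a\<in>atoms F. a \<in> X \<longleftrightarrow> a \<in> ?A" if F: "F \<in> \<Gamma>1" and
     XH: "X \<subseteq> S \<union> head_atoms \<Gamma>2" for F
  proof -
    have "atoms F \<subseteq> atoms_th \<Gamma>1" using F by (auto simp: atoms_th_def)
    thus ?thesis using XH assms(1) by blast
  qed
  have red1: "reduct_th \<Gamma>1 X = reduct_th \<Gamma>1 ?A" if XH: "X \<subseteq> S \<union> head_atoms \<Gamma>2"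
  proof -
    have "reduct F X = reduct F ?A" if F: "F \<in> \<Gamma>1" for F
      using reduct_local[OF loc1[OF F XH]] .
    thus ?thesis unfolding reduct_th_def by (intro image_cong) auto
  qed
  have satloc: "sat_th Y (reduct_th \<Gamma>1 Z) = sat_th (Y \<inter> S) (reduct_th \<Gamma>1 Z)"
    if XH: "Y \<subseteq> S \<union> head_atoms \<Gamma>2" for Y Z
  proof -
    have eq: "sat Y (reduct F Z) = sat (Y \<inter> S) (reduct F Z)" if F: "F \<in> \<Gamma>1" for F
    proof (rule sat_local, rule ballI)
      fix a assume "a \<in> atoms (reduct F Z)"
      hence aF: "a \<in> atoms F" by (rule subsetD[OF atoms_reduct])
      have "a \<in> atoms_th \<Gamma>1" unfolding atoms_th_def using F aF by (rule UN_I)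
      hence "a \<notin> head_atoms \<Gamma>2" using assms(1) by (simp add: disjoint_iff)
      thus "a \<in> Y \<longleftrightarrow> a \<in> Y \<inter> S" using XH by (simp add: subset_iff) blast
    qed
    have "sat_th Y (reduct_th \<Gamma>1 Z) = (\<forall>F\<in>\<Gamma>1. sat Y (reduct F Z))"
      unfolding sat_th_def reduct_th_def by simp
    also have "\<dots> = (\<forall>F\<in>\<Gamma>1. sat (Y \<inter> S) (reduct F Z))" using eq by blast
    also have "\<dots> = sat_th (Y \<inter> S) (reduct_th \<Gamma>1 Z)"
      unfolding sat_th_def reduct_th_def by simp
    finally show ?thesis .
  qed
  show ?thesis
  proof
    assume st: "stable_model X (\<Gamma>1 \<union> \<Gamma>2)"
    have XH: "X \<subseteq> S \<union> head_atoms \<Gamma>2" using stable_heads[OF st] assms(2)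
      unfolding head_atoms_union by blast
    have satX: "sat X F" if "F \<in> \<Gamma>1 \<union> \<Gamma>2" for F
      using st that sat_th_reduct_self[of X "\<Gamma>1 \<union> \<Gamma>2"]
      unfolding stable_model_def sat_th_def by auto
    have min: "\<not> sat_th Y (reduct_th (\<Gamma>1 \<union> \<Gamma>2) X)" if "Y \<subset> X" for Y
      using st that unfolding stable_model_def by blast
    have keep: "sat_th Y (reduct_th \<Gamma> X)" if "Y \<subseteq> X" "\<Gamma> \<subseteq> \<Gamma>1 \<union> \<Gamma>2"
      "(X - Y) \<inter> head_atoms \<Gamma> = {}" for Y \<Gamma>
      unfolding sat_th_def reduct_th_def
    proof clarify
      fix F assume F: "F \<in> \<Gamma>"
      have "(X - Y) \<inter> heads F = {}" using that(3) F by (auto simp: head_atoms_def)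
      moreover have "sat X F" using satX F that(2) by blast
      ultimately show "sat Y (reduct F X)" using heads_keep[OF that(1)] by blast
    qed
    have "sat_th ?A (reduct_th \<Gamma>1 X)" by (rule keep) (use assms(2) in auto)
    hence a: "sat_th ?A (reduct_th \<Gamma>1 ?A)" using red1[OF XH] by simp
    have b: "\<not> sat_th Y (reduct_th \<Gamma>1 ?A)" if Y: "Y \<subset> ?A" for Y
    proof
      assume sY: "sat_th Y (reduct_th \<Gamma>1 ?A)"
      let ?Z = "Y \<union> (X - S)"
      have Zs: "?Z \<subset> X" using Y by blast
      have ZH: "?Z \<subseteq> S \<union> head_atoms \<Gamma>2" using XH Y by blast
      have "?Z \<inter> S = Y" using Y by blast
      hence z1: "sat_th ?Z (reduct_th \<Gamma>1 X)" using satloc[OF ZH] sY red1[OF XH] by simp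
      have z2: "sat_th ?Z (reduct_th \<Gamma>2 X)"
        by (rule keep) (use Zs assms(3) in auto)
      show False using min[OF Zs] z1 z2 by (simp add: reduct_th_union sat_th_union)
    qed
    have c: "sat_th X (reduct_th (Atom ` ?A \<union> \<Gamma>2) X)"
      using st unfolding stable_model_def
      by (auto simp: reduct_th_union sat_th_union reduct_atoms sat_atoms)
    have d: "\<not> sat_th Y (reduct_th (Atom ` ?A \<union> \<Gamma>2) X)" if Y: "Y \<subset> X" for Y
    proof
      assume "sat_th Y (reduct_th (Atom ` ?A \<union> \<Gamma>2) X)"
      hence y1: "?A \<subseteq> Y" and y2: "sat_th Y (reduct_th \<Gamma>2 X)"
        by (auto simp: reduct_th_union sat_th_union reduct_atoms sat_atoms)
      have "(X - Y) \<inter> head_atoms \<Gamma>1 = {}" using y1 assms(2) by blast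
      hence "sat_th Y (reduct_th \<Gamma>1 X)" by (intro keep) (use Y in auto)
      thus False using min[OF Y] y2 by (simp add: reduct_th_union sat_th_union)
    qed
    show "stable_model ?A \<Gamma>1 \<and> stable_model X (Atom ` ?A \<union> \<Gamma>2)"
      unfolding stable_model_def using a b c d by blast
  next
    assume "stable_model ?A \<Gamma>1 \<and> stable_model X (Atom ` ?A \<union> \<Gamma>2)"
    hence s1: "stable_model ?A \<Gamma>1" and s2: "stable_model X (Atom ` ?A \<union> \<Gamma>2)" by auto
    have "X \<subseteq> head_atoms (Atom ` ?A \<union> \<Gamma>2)" using stable_heads[OF s2] .
    moreover have "head_atoms (Atom ` ?A) \<subseteq> S" by (auto simp: head_atoms_def)
    ultimately have XH: "X \<subseteq> S \<union> head_atoms \<Gamma>2" unfolding head_atoms_union by blast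
    have x2: "sat_th X (reduct_th \<Gamma>2 X)" using s2 unfolding stable_model_def
      by (auto simp: reduct_th_union sat_th_union)
    have "sat_th ?A (reduct_th \<Gamma>1 X)" using s1 red1[OF XH] unfolding stable_model_def by simp
    hence x1: "sat_th X (reduct_th \<Gamma>1 X)" using satloc[OF XH] by simp
    have min: "\<not> sat_th Y (reduct_th (\<Gamma>1 \<union> \<Gamma>2) X)" if Y: "Y \<subset> X" for Y
    proof
      assume "sat_th Y (reduct_th (\<Gamma>1 \<union> \<Gamma>2) X)"
      hence y1: "sat_th Y (reduct_th \<Gamma>1 X)" and y2: "sat_th Y (reduct_th \<Gamma>2 X)"
        by (auto simp: reduct_th_union sat_th_union)
      have YH: "Y \<subseteq> S \<union> head_atoms \<Gamma>2" using Y XH by blast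
      have "sat_th (Y \<inter> S) (reduct_th \<Gamma>1 ?A)" using y1 satloc[OF YH] red1[OF XH] by simp
      moreover have "Y \<inter> S \<subseteq> ?A" using Y by blast
      ultimately have "Y \<inter> S = ?A" using s1 unfolding stable_model_def by blast
      hence "?A \<subseteq> Y" by blast
      hence "sat_th Y (reduct_th (Atom ` ?A \<union> \<Gamma>2) X)" using y2
        by (auto simp: reduct_th_union sat_th_union reduct_atoms sat_atoms)
      thus False using s2 Y unfolding stable_model_def by blast
    qed
    show "stable_model X (\<Gamma>1 \<union> \<Gamma>2)" unfolding stable_model_def
      using x1 x2 min by (simp add: reduct_th_union sat_th_union)
  qed
qed

end
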